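(* (a) $\mathsf{P}=\mathsf{U_{tot}P}=\mathsf{Few_{tot}P}$. (b) If $\mathsf{FewP}\subseteq\mathsf{Few_{tot}P}$, then $\mathsf{P}=\mathsf{FewP}$.
   Context: An NPTM is a non-deterministic polynomial-time Turing machine. For an NPTM $M$ and input $x$, $acc_M(x)$ is the number of accepting paths of $M$ on $x$ and $tot_M(x)$ is the number of all computation paths of $M$ on $x$ minus $1$. $\#\mathsf{P}=\{acc_M\}$, $\mathsf{TotP}=\{tot_M\}$ over all NPTMs $M$. $\mathsf{U_{tot}P}$ is the class of languages $L$ for which there is $f\in\mathsf{TotP}$ with $f(x)=1$ if $x\in L$ and $f(x)=0$ if $x\notin L$. $\mathsf{FewP}$ is the class of languages $L$ for which there are $f\in\#\mathsf{P}$ and a polynomial $p$ such that $0<f(x)\le p(|x|)$ if $x\in L$ and $f(x)=0$ if $x\notin L$; $\mathsf{Few_{tot}P}$ is defined identically with $f\in\mathsf{TotP}$. *)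

theory Defs
  imports Main
begin

text \<open>A single-tape nondeterministic Turing machine over input alphabet {0,1}.
  Tape symbols are naturals below ntm_syms; symbol 0 is the blank, the input
  bit False is written as 1 and True as 2. States are naturals below
  ntm_states, the initial state is 0. The transition function gives, for a
  state and a scanned symbol, the list of possible moves
  (new state, written symbol, head displacement in {-1,0,1}); an empty list
  means the machine halts. A computation path is identified with the
  sequence of nondeterministic choices (indices into these lists) made
  until halting.\<close>

record ntm =
  ntm_states :: nat
  ntm_syms :: nat
  ntm_delta :: "nat \<Rightarrow> nat \<Rightarrow> (nat \<times> nat \<times> int) list"
  ntm_accept :: "nat set"

type_synonym config = "nat \<times> (int \<Rightarrow> nat) \<times> int"

definition ntm_wf :: "ntm \<Rightarrow> bool" where
  "ntm_wf M \<longleftrightarrow> 0 < ntm_states M \<and> 3 \<le> ntm_syms M \<and>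
     (\<forall>q s q' s' d. (q', s', d) \<in> set (ntm_delta M q s) \<longrightarrow>
        q' < ntm_states M \<and> s' < ntm_syms M \<and> d \<in> {-1, 0, 1})"

definition init_config :: "bool list \<Rightarrow> config" where
  "init_config x = (0, (\<lambda>i. if 0 \<le> i \<and> nat i < length x
                           then (if x ! nat i then 2 else 1) else 0), 0)"

definition step_choice :: "ntm \<Rightarrow> config \<Rightarrow> nat \<Rightarrow> config option" where
  "step_choice M c i = (case c of (q, t, h) \<Rightarrow>
     (let ts = ntm_delta M q (t h) in
      if i < length ts then
        (case ts ! i of (q', s', d) \<Rightarrow> Some (q', t(h := s'), h + d))
      else None))"

fun run_choices :: "ntm \<Rightarrow> config \<Rightarrow> nat list \<Rightarrow> config option" where
  "run_choices M c [] = Some c"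
| "run_choices M c (i # cs) =
     (case step_choice M c i of None \<Rightarrow> None | Some c' \<Rightarrow> run_choices M c' cs)"

definition halted :: "ntm \<Rightarrow> config \<Rightarrow> bool" where
  "halted M c = (case c of (q, t, h) \<Rightarrow> ntm_delta M q (t h) = [])"

definition comp_paths :: "ntm \<Rightarrow> bool list \<Rightarrow> nat list set" where
  "comp_paths M x = {cs. \<exists>c. run_choices M (init_config x) cs = Some c \<and> halted M c}"

definition acc_paths :: "ntm \<Rightarrow> bool list \<Rightarrow> nat list set" where
  "acc_paths M x = {cs. \<exists>c. run_choices M (init_config x) cs = Some c \<and> halted M c
                          \<and> fst c \<in> ntm_accept M}"

definition acc :: "ntm \<Rightarrow> bool list \<Rightarrow> nat" where
  "acc M x = card (acc_paths M x)"

definition tot :: "ntm \<Rightarrow> bool list \<Rightarrow> nat" where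
  "tot M x = card (comp_paths M x) - 1"

definition poly_time :: "ntm \<Rightarrow> bool" where
  "poly_time M \<longleftrightarrow> (\<exists>k c::nat. \<forall>x cs. run_choices M (init_config x) cs \<noteq> None
                       \<longrightarrow> length cs \<le> c * length x ^ k + c)"

definition NPTM :: "ntm \<Rightarrow> bool" where
  "NPTM M \<longleftrightarrow> ntm_wf M \<and> poly_time M"

definition deterministic :: "ntm \<Rightarrow> bool" where
  "deterministic M \<longleftrightarrow> (\<forall>q s. length (ntm_delta M q s) \<le> 1)"

definition SharpP :: "(bool list \<Rightarrow> nat) set" where
  "SharpP = {f. \<exists>M. NPTM M \<and> (\<forall>x. f x = acc M x)}"

definition TotP :: "(bool list \<Rightarrow> nat) set" where
  "TotP = {f. \<exists>M. NPTM M \<and> (\<forall>x. f x = tot M x)}"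

definition P_class :: "bool list set set" where
  "P_class = {L. \<exists>M. NPTM M \<and> deterministic M \<and> (\<forall>x. x \<in> L \<longleftrightarrow> acc M x > 0)}"

definition U_tot_P :: "bool list set set" where
  "U_tot_P = {L. \<exists>f \<in> TotP. \<forall>x. (x \<in> L \<longrightarrow> f x = 1) \<and> (x \<notin> L \<longrightarrow> f x = 0)}"

definition FewP :: "bool list set set" where
  "FewP = {L. \<exists>f \<in> SharpP. \<exists>k c::nat. \<forall>x.
     (x \<in> L \<longrightarrow> 0 < f x \<and> f x \<le> c * length x ^ k + c) \<and> (x \<notin> L \<longrightarrow> f x = 0)}"

definition Few_tot_P :: "bool list set set" where
  "Few_tot_P = {L. \<exists>f \<in> TotP. \<exists>k c::nat. \<forall>x.
     (x \<in> L \<longrightarrow> 0 < f x \<and> f x \<le> c * length x ^ k + c) \<and> (x \<notin> L \<longrightarrow> f x = 0)}"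

end

theory Submission
  imports Defs
begin


definition opts :: "ntm \<Rightarrow> config \<Rightarrow> (nat \<times> nat \<times> int) list" where
  "opts M c = (case c of (q, t, h) \<Rightarrow> ntm_delta M q (t h))"

definition cpf :: "ntm \<Rightarrow> config \<Rightarrow> nat list set" where
  "cpf M c = {cs. \<exists>c'. run_choices M c cs = Some c' \<and> halted M c'}"

definition apf :: "ntm \<Rightarrow> config \<Rightarrow> nat list set" where
  "apf M c = {cs. \<exists>c'. run_choices M c cs = Some c' \<and> halted M c' \<and> fst c' \<in> ntm_accept M}"

lemma comp_paths_cpf: "comp_paths M x = cpf M (init_config x)"
  by (simp add: comp_paths_def cpf_def)

lemma acc_paths_apf: "acc_paths M x = apf M (init_config x)"
  by (simp add: acc_paths_def apf_def)

lemma apf_sub: "apf M c \<subseteq> cpf M c"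
  by (auto simp: apf_def cpf_def)

lemma step_none: "\<not> i < length (opts M c) \<Longrightarrow> step_choice M c i = None"
  by (cases c) (simp add: step_choice_def opts_def Let_def)

lemma step_some: "i < length (opts M c) \<Longrightarrow> \<exists>c'. step_choice M c i = Some c'"
  by (cases c) (simp add: step_choice_def opts_def Let_def split: prod.split)

lemma step_lt: "step_choice M c i = Some c' \<Longrightarrow> i < length (opts M c)"
  using step_none[of i M c] by (cases "i < length (opts M c)") auto

lemma halted_opts: "halted M c \<longleftrightarrow> opts M c = []"
  by (cases c) (simp add: halted_def opts_def)

lemma step_wf: "ntm_wf M \<Longrightarrow> step_choice M c i = Some c' \<Longrightarrow> fst c' < ntm_states M"
proof (cases c)
  case (fields q t h)
  assume wf: "ntm_wf M" and s: "step_choice M c i = Some c'"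
  let ?ts = "ntm_delta M q (t h)"
  have lt: "i < length ?ts" using step_lt[OF s] fields by (simp add: opts_def)
  obtain q' s' d where e: "?ts ! i = (q', s', d)" by (cases "?ts ! i") auto
  have "(q', s', d) \<in> set ?ts" using lt e nth_mem by metis
  hence "q' < ntm_states M" using wf by (simp add: ntm_wf_def)
  moreover have "c' = (q', t(h := s'), h + d)" using s fields lt e
    by (simp add: step_choice_def Let_def)
  ultimately show ?thesis by simp
qed

lemma run_append: "run_choices M c (xs @ ys) =
   (case run_choices M c xs of None \<Rightarrow> None | Some c' \<Rightarrow> run_choices M c' ys)"
  by (induction xs arbitrary: c) (auto split: option.split)

lemma run_Cons_Some: "step_choice M c i = Some c1 \<Longrightarrow> run_choices M c (i # r) = run_choices M c1 r"
  by simp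

lemma fin_runs: "finite {cs. length cs \<le> n \<and> run_choices M c cs \<noteq> None}"
proof (induction n arbitrary: c)
  case 0
  have "{cs. length cs \<le> 0 \<and> run_choices M c cs \<noteq> None} \<subseteq> {[]}" by auto
  then show ?case using finite_subset by blast
next
  case (Suc n)
  let ?S = "insert [] (\<Union>i\<in>{..<length (opts M c)}. (\<lambda>cs. i # cs) `
             {cs. length cs \<le> n \<and> run_choices M (the (step_choice M c i)) cs \<noteq> None})"
  have "{cs. length cs \<le> Suc n \<and> run_choices M c cs \<noteq> None} \<subseteq> ?S"
  proof
    fix cs assume "cs \<in> {cs. length cs \<le> Suc n \<and> run_choices M c cs \<noteq> None}"
    then have a: "length cs \<le> Suc n" "run_choices M c cs \<noteq> None" by auto
    show "cs \<in> ?S"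
    proof (cases cs)
      case Nil then show ?thesis by simp
    next
      case (Cons i r)
      then obtain c1 where s: "step_choice M c i = Some c1" using a(2)
        by (cases "step_choice M c i") auto
      have "r \<in> {cs. length cs \<le> n \<and> run_choices M (the (step_choice M c i)) cs \<noteq> None}"
        using a Cons s by simp
      then show ?thesis using Cons step_lt[OF s] by blast
    qed
  qed
  moreover have "finite ?S" using Suc.IH by auto
  ultimately show ?case using finite_subset by blast
qed

lemma poly_bound: "poly_time M \<Longrightarrow> \<exists>B. \<forall>cs. run_choices M (init_config x) cs \<noteq> None \<longrightarrow> length cs \<le> B"
  unfolding poly_time_def by blast

lemma fin_cpf: "poly_time M \<Longrightarrow> finite (cpf M (init_config x))"
proof -
  assume "poly_time M"
  then obtain B where B: "\<forall>cs. run_choices M (init_config x) cs \<noteq> None \<longrightarrow> length cs \<le> B"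
    using poly_bound by blast
  have "cpf M (init_config x) \<subseteq> {cs. length cs \<le> B \<and> run_choices M (init_config x) cs \<noteq> None}"
    using B by (auto simp: cpf_def)
  then show ?thesis using fin_runs finite_subset by blast
qed

lemma completion:
  assumes pt: "poly_time M" and r: "run_choices M (init_config x) p = Some c"
  shows "\<exists>cs c'. run_choices M c cs = Some c' \<and> halted M c'"
proof -
  obtain B where B: "\<forall>cs. run_choices M (init_config x) cs \<noteq> None \<longrightarrow> length cs \<le> B"
    using poly_bound[OF pt] by blast
  have "\<And>p c. B - length p = m \<Longrightarrow> run_choices M (init_config x) p = Some c \<Longrightarrow>
          \<exists>cs c'. run_choices M c cs = Some c' \<and> halted M c'" for m
  proof (induction m rule: less_induct)
    case (less m)
    show ?case
    proof (cases "halted M c")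
      case True
      then show ?thesis by (intro exI[of _ "[]"]) auto
    next
      case False
      then have "0 < length (opts M c)" using halted_opts by auto
      then obtain c1 where s: "step_choice M c 0 = Some c1" using step_some by blast
      have r1: "run_choices M (init_config x) (p @ [0]) = Some c1"
        using less.prems s by (simp add: run_append)
      then have "length (p @ [0]) \<le> B" using B[rule_format, of "p @ [0]"] by simp
      then have "B - length (p @ [0]) < m" using less.prems by auto
      then obtain cs c' where "run_choices M c1 cs = Some c' \<and> halted M c'"
        using less.IH r1 by blast
      then show ?thesis using s by (intro exI[of _ "0 # cs"]) auto
    qed
  qed
  then show ?thesis using r by blast
qed

lemma zeros_runs:
  assumes "\<forall>cs0 c1. set cs0 \<subseteq> {0} \<longrightarrow> run_choices M c cs0 = Some c1 \<longrightarrow> length (opts M c1) \<le> 1"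
    and "run_choices M c cs \<noteq> None"
  shows "set cs \<subseteq> {0}"
  using assms
proof (induction cs arbitrary: c)
  case Nil then show ?case by simp
next
  case (Cons i r)
  then obtain c1 where s: "step_choice M c i = Some c1"
    by (cases "step_choice M c i") auto
  have "length (opts M c) \<le> 1" using Cons.prems(1)[rule_format, of "[]" c] by simp
  then have i0: "i = 0" using step_lt[OF s] by simp
  have "\<forall>cs0 c2. set cs0 \<subseteq> {0} \<longrightarrow> run_choices M c1 cs0 = Some c2 \<longrightarrow> length (opts M c2) \<le> 1"
  proof (intro allI impI)
    fix cs0 c2 assume "set cs0 \<subseteq> {0}" "run_choices M c1 cs0 = Some c2"
    then show "length (opts M c2) \<le> 1"
      using Cons.prems(1)[rule_format, of "0 # cs0" c2] s i0 by simp
  qed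
  moreover have "run_choices M c1 r \<noteq> None" using Cons.prems(2) s by simp
  ultimately show ?case using Cons.IH i0 by simp
qed

lemma zeros_unique:
  assumes "run_choices M c cs1 = Some c1" "halted M c1" "run_choices M c cs2 = Some c2" "halted M c2"
    "set cs1 \<subseteq> {0}" "set cs2 \<subseteq> {0}"
  shows "cs1 = cs2"
  using assms
proof (induction cs1 arbitrary: cs2 c)
  case Nil
  then show ?case
    by (cases cs2) (auto simp: halted_opts step_none)
next
  case (Cons i r)
  show ?case
  proof (cases cs2)
    case Nil
    then have "halted M c" using Cons.prems by simp
    then show ?thesis using Cons.prems(1) by (simp add: halted_opts step_none)
  next
    case (Cons j r2)
    then have ij: "i = 0" "j = 0" using Cons.prems \<open>cs2 = j # r2\<close> by auto
    obtain c' where s: "step_choice M c 0 = Some c'" using Cons.prems(1) ij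
      by (cases "step_choice M c 0") auto
    have "r = r2" using Cons.IH[of c' r2] Cons.prems s ij \<open>cs2 = j # r2\<close> by auto
    then show ?thesis using ij \<open>cs2 = j # r2\<close> by simp
  qed
qed



definition xtm :: "ntm \<Rightarrow> (nat \<Rightarrow> nat \<Rightarrow> bool) \<Rightarrow> nat \<Rightarrow> ntm" where
  "xtm M P g = \<lparr>ntm_states = Suc (ntm_states M), ntm_syms = ntm_syms M,
     ntm_delta = (\<lambda>q s. if q < ntm_states M then
        (if P q s then replicate g (ntm_states M, 0, 0) else ntm_delta M q s) else []),
     ntm_accept = {ntm_states M}\<rparr>"

lemma x_step1: "q < ntm_states M \<Longrightarrow> \<not> P q (t h) \<Longrightarrow>
   step_choice (xtm M P g) (q, t, h) i = step_choice M (q, t, h) i"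
  by (simp add: step_choice_def xtm_def)

lemma x_step2: "q < ntm_states M \<Longrightarrow> P q (t h) \<Longrightarrow>
   step_choice (xtm M P g) (q, t, h) i = (if i < g then Some (ntm_states M, t(h := 0), h) else None)"
  by (simp add: step_choice_def xtm_def Let_def)

lemma x_stepA: "\<not> q < ntm_states M \<Longrightarrow> step_choice (xtm M P g) (q, t, h) i = None"
  by (simp add: step_choice_def xtm_def Let_def)

lemma x_runA: "\<not> q < ntm_states M \<Longrightarrow>
   run_choices (xtm M P g) (q, t, h) cs = (if cs = [] then Some (q, t, h) else None)"
  by (cases cs) (simp_all add: x_stepA)

lemma x_haltedA: "\<not> q < ntm_states M \<Longrightarrow> halted (xtm M P g) (q, t, h)"
  by (simp add: halted_def xtm_def)

lemma x_halted: "q < ntm_states M \<Longrightarrow>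
   halted (xtm M P g) (q, t, h) \<longleftrightarrow> (if P q (t h) then g = 0 else halted M (q, t, h))"
  by (simp add: halted_def xtm_def)

lemma x_accept: "ntm_accept (xtm M P g) = {ntm_states M}"
  by (simp add: xtm_def)

lemma x_wf: "ntm_wf M \<Longrightarrow> ntm_wf (xtm M P g)"
  unfolding ntm_wf_def xtm_def
  by (auto split: if_splits) (metis less_SucI)+

lemma x_run_len:
  assumes wf: "ntm_wf M"
  shows "q < ntm_states M \<Longrightarrow> run_choices (xtm M P g) (q, t, h) cs \<noteq> None \<Longrightarrow>
    \<exists>cs1. run_choices M (q, t, h) cs1 \<noteq> None \<and> length cs \<le> Suc (length cs1)"
proof (induction cs arbitrary: q t h)
  case Nil
  then show ?case by (intro exI[of _ "[]"]) simp
next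
  case (Cons i r)
  show ?case
  proof (cases "P q (t h)")
    case True
    then have "i < g" and "run_choices (xtm M P g) (ntm_states M, t(h := 0), h) r \<noteq> None"
      using Cons.prems x_step2[of q M P t h g i] by (auto split: if_splits)
    then have "r = []" using x_runA[of "ntm_states M" M P g] by (auto split: if_splits)
    then show ?thesis by (intro exI[of _ "[]"]) simp
  next
    case False
    then obtain c1 where s: "step_choice M (q, t, h) i = Some c1"
      using Cons.prems x_step1[of q M P t h g i]
      by (cases "step_choice M (q, t, h) i") auto
    obtain q1 t1 h1 where c1: "c1 = (q1, t1, h1)" by (cases c1)
    have q1: "q1 < ntm_states M" using step_wf[OF wf s] c1 by simp
    have "run_choices (xtm M P g) (q1, t1, h1) r \<noteq> None"
      using Cons.prems x_step1[of q M P t h g i] False s c1 by simp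
    then obtain cs1 where "run_choices M (q1, t1, h1) cs1 \<noteq> None \<and> length r \<le> Suc (length cs1)"
      using Cons.IH q1 by blast
    then show ?thesis using s c1 by (intro exI[of _ "i # cs1"]) simp
  qed
qed

lemma x_NPTM:
  assumes "NPTM M" shows "NPTM (xtm M P g)"
proof -
  have wf: "ntm_wf M" and pt: "poly_time M" using assms by (auto simp: NPTM_def)
  obtain k C where kc: "\<forall>x cs. run_choices M (init_config x) cs \<noteq> None
                       \<longrightarrow> length cs \<le> C * length x ^ k + C"
    using pt unfolding poly_time_def by blast
  have "\<forall>x cs. run_choices (xtm M P g) (init_config x) cs \<noteq> None
                       \<longrightarrow> length cs \<le> (C + 1) * length x ^ k + (C + 1)"
  proof (intro allI impI)
    fix x cs
    assume a: "run_choices (xtm M P g) (init_config x) cs \<noteq> None"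
    have s0: "0 < ntm_states M" using wf by (simp add: ntm_wf_def)
    obtain t0 where i0: "init_config x = (0, t0, 0)" by (simp add: init_config_def)
    obtain cs1 where "run_choices M (init_config x) cs1 \<noteq> None \<and> length cs \<le> Suc (length cs1)"
      using x_run_len[OF wf s0, of P g t0 0 cs] a i0 by auto
    then have "length cs \<le> Suc (C * length x ^ k + C)" using kc by fastforce
    then show "length cs \<le> (C + 1) * length x ^ k + (C + 1)"
      by (simp add: algebra_simps)
  qed
  then have "poly_time (xtm M P g)" unfolding poly_time_def by blast
  then show ?thesis using x_wf[OF wf] by (simp add: NPTM_def)
qed



definition br :: "ntm \<Rightarrow> config \<Rightarrow> bool" where
  "br M c \<longleftrightarrow> (\<exists>cs0 c1. set cs0 \<subseteq> {0} \<and> run_choices M c cs0 = Some c1 \<and> 2 \<le> length (opts M c1))"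

definition PN :: "ntm \<Rightarrow> nat \<Rightarrow> nat \<Rightarrow> bool" where
  "PN M q s \<longleftrightarrow> 2 \<le> length (ntm_delta M q s)"

lemma N_acc_imp:
  assumes wf: "ntm_wf M"
  shows "q < ntm_states M \<Longrightarrow> run_choices (xtm M (PN M) 1) (q, t, h) cs = Some c' \<Longrightarrow>
    fst c' = ntm_states M \<Longrightarrow> br M (q, t, h)"
proof (induction cs arbitrary: q t h)
  case Nil then show ?case by force
next
  case (Cons i r)
  show ?case
  proof (cases "PN M q (t h)")
    case True
    then show ?thesis unfolding br_def
      by (intro exI[of _ "[]"] exI[of _ "(q, t, h)"]) (simp add: opts_def PN_def)
  next
    case False
    then obtain c1 where s: "step_choice M (q, t, h) i = Some c1"
      using Cons.prems x_step1[of q M "PN M" t h 1 i]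
      by (cases "step_choice M (q, t, h) i") auto
    obtain q1 t1 h1 where c1: "c1 = (q1, t1, h1)" by (cases c1)
    have q1: "q1 < ntm_states M" using step_wf[OF wf s] c1 by simp
    have i0: "i = 0" using step_lt[OF s] False by (simp add: opts_def PN_def)
    have "run_choices (xtm M (PN M) 1) (q1, t1, h1) r = Some c'"
      using Cons.prems x_step1[of q M "PN M" t h 1 i] False s c1 by simp
    then have "br M (q1, t1, h1)" using Cons.IH q1 Cons.prems by blast
    then obtain cs0 c2 where "set cs0 \<subseteq> {0} \<and> run_choices M c1 cs0 = Some c2 \<and> 2 \<le> length (opts M c2)"
      unfolding br_def c1 by blast
    then show ?thesis unfolding br_def using s i0
      by (intro exI[of _ "0 # cs0"] exI[of _ c2]) simp
  qed
qed

lemma N_acc_if: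
  assumes wf: "ntm_wf M"
  shows "q < ntm_states M \<Longrightarrow> set cs0 \<subseteq> {0} \<Longrightarrow> run_choices M (q, t, h) cs0 = Some c1 \<Longrightarrow>
    2 \<le> length (opts M c1) \<Longrightarrow>
    \<exists>cs c'. run_choices (xtm M (PN M) 1) (q, t, h) cs = Some c' \<and>
       halted (xtm M (PN M) 1) c' \<and> fst c' = ntm_states M"
proof (induction cs0 arbitrary: q t h)
  case Nil
  then have "c1 = (q, t, h)" by simp
  then have "PN M q (t h)" using Nil.prems(4) by (simp add: opts_def PN_def)
  then show ?case using Nil.prems x_step2[of q M "PN M" t h 1 0]
    by (intro exI[of _ "[0]"]) (auto simp: x_haltedA)
next
  case (Cons j r)
  show ?case
  proof (cases "PN M q (t h)")
    case True
    then show ?thesis using Cons.prems x_step2[of q M "PN M" t h 1 0]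
      by (intro exI[of _ "[0]"]) (auto simp: x_haltedA)
  next
    case False
    have j0: "j = 0" using Cons.prems by simp
    obtain c2 where s: "step_choice M (q, t, h) 0 = Some c2"
      using Cons.prems j0 by (cases "step_choice M (q, t, h) 0") auto
    obtain q2 t2 h2 where c2: "c2 = (q2, t2, h2)" by (cases c2)
    have q2: "q2 < ntm_states M" using step_wf[OF wf s] c2 by simp
    have rr: "run_choices M (q2, t2, h2) r = Some c1" using Cons.prems j0 s c2 by simp
    have sr: "set r \<subseteq> {0}" using Cons.prems(2) by simp
    obtain cs c' where "run_choices (xtm M (PN M) 1) (q2, t2, h2) cs = Some c' \<and>
       halted (xtm M (PN M) 1) c' \<and> fst c' = ntm_states M"
      using Cons.IH[OF q2 sr rr Cons.prems(4)] by blast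
    then show ?thesis using x_step1[of q M "PN M" t h 1 0] False s c2 Cons.prems
      by (intro exI[of _ "0 # cs"] exI[of _ c']) simp
  qed
qed

lemma M_side:
  assumes pt: "poly_time M"
  shows "0 < tot M x \<longleftrightarrow> br M (init_config x)"
proof
  assume b: "br M (init_config x)"
  then obtain cs0 c1 where a: "set cs0 \<subseteq> {0}" "run_choices M (init_config x) cs0 = Some c1"
     "2 \<le> length (opts M c1)" unfolding br_def by blast
  have l: "0 < length (opts M c1)" "1 < length (opts M c1)" using a(3) by auto
  obtain ca where sa: "step_choice M c1 0 = Some ca" using step_some[OF l(1)] by blast
  obtain cb where sb: "step_choice M c1 1 = Some cb" using step_some[OF l(2)] by blast
  have ra: "run_choices M (init_config x) (cs0 @ [0]) = Some ca" using a(2) sa by (simp add: run_append)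
  have rb: "run_choices M (init_config x) (cs0 @ [1]) = Some cb" using a(2) sb by (simp add: run_append)
  obtain ea ca' where ea: "run_choices M ca ea = Some ca' \<and> halted M ca'" using completion[OF pt ra] by blast
  obtain eb cb' where eb: "run_choices M cb eb = Some cb' \<and> halted M cb'" using completion[OF pt rb] by blast
  have "run_choices M (init_config x) (cs0 @ 0 # ea) = Some ca'" using a(2) sa ea by (simp add: run_append)
  then have "cs0 @ 0 # ea \<in> comp_paths M x" using ea unfolding comp_paths_def by blast
  moreover have "run_choices M (init_config x) (cs0 @ 1 # eb) = Some cb'" using a(2) sb eb by (simp add: run_append)
  then have "cs0 @ 1 # eb \<in> comp_paths M x" using eb unfolding comp_paths_def by blast
  ultimately have "{cs0 @ 0 # ea, cs0 @ 1 # eb} \<subseteq> comp_paths M x" by simp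
  moreover have "finite (comp_paths M x)" using fin_cpf[OF pt] by (simp add: comp_paths_cpf)
  ultimately have "card {cs0 @ 0 # ea, cs0 @ 1 # eb} \<le> card (comp_paths M x)" by (rule card_mono[rotated])
  then have "2 \<le> card (comp_paths M x)" by simp
  then show "0 < tot M x" by (simp add: tot_def)
next
  assume t: "0 < tot M x"
  show "br M (init_config x)"
  proof (rule ccontr)
    assume nb: "\<not> br M (init_config x)"
    then have h: "\<forall>cs0 c1. set cs0 \<subseteq> {0} \<longrightarrow> run_choices M (init_config x) cs0 = Some c1 \<longrightarrow> length (opts M c1) \<le> 1"
      unfolding br_def by force
    have "\<forall>a1\<in>comp_paths M x. \<forall>a2\<in>comp_paths M x. a1 = a2"
    proof (intro ballI)
      fix a1 a2 assume "a1 \<in> comp_paths M x" "a2 \<in> comp_paths M x"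
      then obtain c1 c2 where r: "run_choices M (init_config x) a1 = Some c1" "halted M c1"
          "run_choices M (init_config x) a2 = Some c2" "halted M c2"
        by (auto simp: comp_paths_def)
      have "set a1 \<subseteq> {0}" using zeros_runs[OF h, of a1] r(1) by (metis option.distinct(1))
      moreover have "set a2 \<subseteq> {0}" using zeros_runs[OF h, of a2] r(3) by (metis option.distinct(1))
      ultimately show "a1 = a2" using zeros_unique[OF r] by simp
    qed
    moreover have "finite (comp_paths M x)" using fin_cpf[OF pt] by (simp add: comp_paths_cpf)
    ultimately have "card (comp_paths M x) \<le> Suc 0" using card_le_Suc0_iff_eq by blast
    then show False using t by (simp add: tot_def)
  qed
qed

lemma det_opts: "deterministic M \<Longrightarrow> length (opts M c) \<le> 1"
  by (cases c) (simp add: deterministic_def opts_def)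

lemma det_unique:
  assumes "NPTM M" "deterministic M"
  shows "\<exists>p. comp_paths M x = {p}"
proof -
  have pt: "poly_time M" using assms by (simp add: NPTM_def)
  obtain cs c' where e: "run_choices M (init_config x) cs = Some c' \<and> halted M c'"
    using completion[OF pt, of x "[]" "init_config x"] by auto
  have h: "\<forall>cs0 c1. set cs0 \<subseteq> {0} \<longrightarrow> run_choices M (init_config x) cs0 = Some c1 \<longrightarrow> length (opts M c1) \<le> 1"
    using det_opts[OF assms(2)] by blast
  have "comp_paths M x = {cs}"
  proof
    show "{cs} \<subseteq> comp_paths M x" using e unfolding comp_paths_def by blast
    show "comp_paths M x \<subseteq> {cs}"
    proof
      fix a assume "a \<in> comp_paths M x"
      then obtain c1 where r: "run_choices M (init_config x) a = Some c1" "halted M c1"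
        by (auto simp: comp_paths_def)
      have "set a \<subseteq> {0}" using zeros_runs[OF h, of a] r(1) by (metis option.distinct(1))
      moreover have "set cs \<subseteq> {0}" using zeros_runs[OF h, of cs] e by (metis option.distinct(1))
      ultimately show "a \<in> {cs}" using zeros_unique[of M "init_config x" a c1 cs c'] r e by simp
    qed
  qed
  then show ?thesis by blast
qed



definition P2 :: "ntm \<Rightarrow> nat \<Rightarrow> nat \<Rightarrow> bool" where
  "P2 M q s \<longleftrightarrow> ntm_delta M q s = [] \<and> q \<in> ntm_accept M"

lemma N2_sub:
  assumes wf: "ntm_wf M"
  shows "q < ntm_states M \<Longrightarrow> cs \<in> cpf (xtm M (P2 M) 2) (q, t, h) \<Longrightarrow>
    cs \<in> cpf M (q, t, h) - apf M (q, t, h) \<or> (\<exists>p i. cs = p @ [i] \<and> i < 2 \<and> p \<in> apf M (q, t, h))"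
proof (induction cs arbitrary: q t h)
  case Nil
  then have "halted (xtm M (P2 M) 2) (q, t, h)" by (simp add: cpf_def)
  then have "\<not> P2 M q (t h)" "halted M (q, t, h)" using x_halted[OF Nil.prems(1)] by (auto split: if_splits)
  then show ?case by (auto simp: cpf_def apf_def P2_def halted_def)
next
  case (Cons i r)
  show ?case
  proof (cases "P2 M q (t h)")
    case True
    then have "i < 2" and "run_choices (xtm M (P2 M) 2) (ntm_states M, t(h := 0), h) r \<noteq> None"
      using Cons.prems x_step2[of q M "P2 M" t h 2 i] by (auto simp: cpf_def split: if_splits)
    then have "r = []" using x_runA[of "ntm_states M" M "P2 M" 2] by (auto split: if_splits)
    moreover have "[] \<in> apf M (q, t, h)" using True by (simp add: apf_def P2_def halted_def)
    ultimately show ?thesis using \<open>i < 2\<close> by (intro disjI2 exI[of _ "[]"] exI[of _ i]) simp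
  next
    case False
    then obtain c1 where s: "step_choice M (q, t, h) i = Some c1"
      using Cons.prems x_step1[of q M "P2 M" t h 2 i]
      by (cases "step_choice M (q, t, h) i") (auto simp: cpf_def)
    obtain q1 t1 h1 where c1: "c1 = (q1, t1, h1)" by (cases c1)
    have q1: "q1 < ntm_states M" using step_wf[OF wf s] c1 by simp
    have "r \<in> cpf (xtm M (P2 M) 2) (q1, t1, h1)"
      using Cons.prems x_step1[of q M "P2 M" t h 2 i] False s c1 by (simp add: cpf_def)
    then have "r \<in> cpf M c1 - apf M c1 \<or> (\<exists>p j. r = p @ [j] \<and> j < 2 \<and> p \<in> apf M c1)"
      using Cons.IH q1 c1 by blast
    then show ?thesis
    proof
      assume "r \<in> cpf M c1 - apf M c1"
      then show ?thesis using s by (simp add: cpf_def apf_def)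
    next
      assume "\<exists>p j. r = p @ [j] \<and> j < 2 \<and> p \<in> apf M c1"
      then obtain p j where "r = p @ [j]" "j < 2" "p \<in> apf M c1" by blast
      then show ?thesis using s by (intro disjI2 exI[of _ "i # p"] exI[of _ j]) (simp add: apf_def)
    qed
  qed
qed

lemma N2_sup1:
  assumes wf: "ntm_wf M"
  shows "q < ntm_states M \<Longrightarrow> cs \<in> cpf M (q, t, h) - apf M (q, t, h) \<Longrightarrow>
    cs \<in> cpf (xtm M (P2 M) 2) (q, t, h)"
proof (induction cs arbitrary: q t h)
  case Nil
  then have hm: "halted M (q, t, h)" "q \<notin> ntm_accept M" by (auto simp: cpf_def apf_def)
  then have np: "\<not> P2 M q (t h)" by (simp add: P2_def)
  have "halted (xtm M (P2 M) 2) (q, t, h)" using x_halted[of q M "P2 M" 2 t h] Nil.prems(1) np hm by simp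
  then show ?case unfolding cpf_def by auto
next
  case (Cons i r)
  obtain c1 where s: "step_choice M (q, t, h) i = Some c1"
    using Cons.prems by (cases "step_choice M (q, t, h) i") (auto simp: cpf_def)
  have "ntm_delta M q (t h) \<noteq> []" using step_lt[OF s] by (auto simp: opts_def)
  then have F: "\<not> P2 M q (t h)" by (simp add: P2_def)
  obtain q1 t1 h1 where c1: "c1 = (q1, t1, h1)" by (cases c1)
  have q1: "q1 < ntm_states M" using step_wf[OF wf s] c1 by simp
  have "r \<in> cpf M c1 - apf M c1" using Cons.prems s by (simp add: cpf_def apf_def)
  then have "r \<in> cpf (xtm M (P2 M) 2) c1" using Cons.IH q1 c1 by blast
  then show ?case using x_step1[of q M "P2 M" t h 2 i] Cons.prems(1) F s by (simp add: cpf_def)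
qed

lemma N2_sup2:
  assumes wf: "ntm_wf M"
  shows "q < ntm_states M \<Longrightarrow> p \<in> apf M (q, t, h) \<Longrightarrow> i < 2 \<Longrightarrow>
    p @ [i] \<in> cpf (xtm M (P2 M) 2) (q, t, h)"
proof (induction p arbitrary: q t h)
  case Nil
  then have "P2 M q (t h)" by (simp add: apf_def P2_def halted_def)
  then show ?case using x_step2[of q M "P2 M" t h 2 i] Nil.prems
    by (simp add: cpf_def x_haltedA)
next
  case (Cons j r)
  obtain c1 where s: "step_choice M (q, t, h) j = Some c1"
    using Cons.prems by (cases "step_choice M (q, t, h) j") (auto simp: apf_def)
  have "ntm_delta M q (t h) \<noteq> []" using step_lt[OF s] by (auto simp: opts_def)
  then have F: "\<not> P2 M q (t h)" by (simp add: P2_def)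
  obtain q1 t1 h1 where c1: "c1 = (q1, t1, h1)" by (cases c1)
  have q1: "q1 < ntm_states M" using step_wf[OF wf s] c1 by simp
  have "r \<in> apf M c1" using Cons.prems s by (simp add: apf_def)
  then have "r @ [i] \<in> cpf (xtm M (P2 M) 2) c1" using Cons.IH q1 c1 Cons.prems by blast
  then show ?case using x_step1[of q M "P2 M" t h 2 j] Cons.prems(1) F s by (simp add: cpf_def)
qed

lemma N2_eq:
  assumes wf: "ntm_wf M" and q: "q < ntm_states M"
  shows "cpf (xtm M (P2 M) 2) (q, t, h) =
    (cpf M (q, t, h) - apf M (q, t, h)) \<union> {p @ [i] | p i. p \<in> apf M (q, t, h) \<and> i < 2}"
  using N2_sub[OF wf q] N2_sup1[OF wf q] N2_sup2[OF wf q] by blast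

lemma init_form: "\<exists>t0. init_config x = (0, t0, 0)"
  by (simp add: init_config_def)

lemma P_sub_U: "L \<in> P_class \<Longrightarrow> L \<in> U_tot_P"
proof -
  assume "L \<in> P_class"
  then obtain M where M: "NPTM M" "deterministic M" "\<forall>x. x \<in> L \<longleftrightarrow> acc M x > 0"
    by (auto simp: P_class_def)
  have wf: "ntm_wf M" using M by (simp add: NPTM_def)
  have s0: "0 < ntm_states M" using wf by (simp add: ntm_wf_def)
  let ?N = "xtm M (P2 M) 2"
  have "tot ?N \<in> TotP" using x_NPTM[OF M(1)] by (auto simp: TotP_def)
  moreover have "\<forall>x. (x \<in> L \<longrightarrow> tot ?N x = 1) \<and> (x \<notin> L \<longrightarrow> tot ?N x = 0)"
  proof
    fix x
    obtain t0 where i0: "init_config x = (0, t0, 0)" using init_form by blast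
    obtain p where p: "cpf M (init_config x) = {p}" using det_unique[OF M(1,2)]
      by (metis comp_paths_cpf)
    have eq: "cpf ?N (init_config x) = (cpf M (init_config x) - apf M (init_config x)) \<union>
        {p @ [i] | p i. p \<in> apf M (init_config x) \<and> i < 2}"
      using N2_eq[OF wf s0] i0 by simp
    have sub: "apf M (init_config x) \<subseteq> {p}" using apf_sub p by metis
    show "(x \<in> L \<longrightarrow> tot ?N x = 1) \<and> (x \<notin> L \<longrightarrow> tot ?N x = 0)"
    proof (cases "p \<in> apf M (init_config x)")
      case True
      then have a: "apf M (init_config x) = {p}" using sub by blast
      have "cpf ?N (init_config x) = {p @ [0], p @ [1]}"
        unfolding eq a p by (auto simp: less_2_cases_iff)
      then have "tot ?N x = 1" by (simp add: tot_def comp_paths_cpf)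
      moreover have "acc M x = 1" using a by (simp add: acc_def acc_paths_apf)
      ultimately show ?thesis using M(3) by simp
    next
      case False
      then have a: "apf M (init_config x) = {}" using sub by blast
      have "cpf ?N (init_config x) = {p}" unfolding eq a p by auto
      then have "tot ?N x = 0" by (simp add: tot_def comp_paths_cpf)
      moreover have "acc M x = 0" using a by (simp add: acc_def acc_paths_apf)
      ultimately show ?thesis using M(3) by simp
    qed
  qed
  ultimately show ?thesis unfolding U_tot_P_def by blast
qed

lemma U_sub_F: "L \<in> U_tot_P \<Longrightarrow> L \<in> Few_tot_P"
proof -
  assume "L \<in> U_tot_P"
  then obtain f where f: "f \<in> TotP" "\<forall>x. (x \<in> L \<longrightarrow> f x = 1) \<and> (x \<notin> L \<longrightarrow> f x = 0)"
    unfolding U_tot_P_def by blast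
  then have "\<forall>x. (x \<in> L \<longrightarrow> 0 < f x \<and> f x \<le> 1 * length x ^ 0 + 1) \<and> (x \<notin> L \<longrightarrow> f x = 0)"
    by simp
  then show ?thesis unfolding Few_tot_P_def using f(1) by blast
qed

lemma P_sub_Few: "L \<in> P_class \<Longrightarrow> L \<in> FewP"
proof -
  assume "L \<in> P_class"
  then obtain M where M: "NPTM M" "deterministic M" "\<forall>x. x \<in> L \<longleftrightarrow> acc M x > 0"
    by (auto simp: P_class_def)
  have "acc M \<in> SharpP" using M(1) by (auto simp: SharpP_def)
  moreover have "\<forall>x. (x \<in> L \<longrightarrow> 0 < acc M x \<and> acc M x \<le> 1 * length x ^ 0 + 1) \<and> (x \<notin> L \<longrightarrow> acc M x = 0)"
  proof
    fix x
    obtain p where p: "cpf M (init_config x) = {p}" using det_unique[OF M(1,2)]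
      by (metis comp_paths_cpf)
    have "card (apf M (init_config x)) \<le> card {p}" using apf_sub[of M "init_config x"] p
      by (metis card_mono finite.emptyI finite.insertI)
    then have "acc M x \<le> 1" by (simp add: acc_def acc_paths_apf)
    then show "(x \<in> L \<longrightarrow> 0 < acc M x \<and> acc M x \<le> 1 * length x ^ 0 + 1) \<and> (x \<notin> L \<longrightarrow> acc M x = 0)"
      using M(3) by auto
  qed
  ultimately show ?thesis unfolding FewP_def by blast
qed

lemma F_sub_P: "L \<in> Few_tot_P \<Longrightarrow> L \<in> P_class"
proof -
  assume "L \<in> Few_tot_P"
  then obtain f k C where f: "f \<in> TotP" "\<forall>x. (x \<in> L \<longrightarrow> 0 < f x \<and> f x \<le> C * length x ^ k + C) \<and> (x \<notin> L \<longrightarrow> f x = 0)"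
    unfolding Few_tot_P_def by blast
  then obtain M where M: "NPTM M" "\<forall>x. f x = tot M x" by (auto simp: TotP_def)
  have wf: "ntm_wf M" and pt: "poly_time M" using M by (auto simp: NPTM_def)
  have s0: "0 < ntm_states M" using wf by (simp add: ntm_wf_def)
  let ?N = "xtm M (PN M) 1"
  have NN: "NPTM ?N" using x_NPTM[OF M(1)] .
  have ptN: "poly_time ?N" using NN by (simp add: NPTM_def)
  have det: "deterministic ?N"
    unfolding deterministic_def xtm_def PN_def by auto
  have "\<forall>x. x \<in> L \<longleftrightarrow> acc ?N x > 0"
  proof
    fix x
    obtain t0 where i0: "init_config x = (0, t0, 0)" using init_form by blast
    have "x \<in> L \<longleftrightarrow> 0 < tot M x" using f(2) M(2) by (metis less_irrefl)
    also have "\<dots> \<longleftrightarrow> br M (init_config x)" using M_side[OF pt] .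
    also have "\<dots> \<longleftrightarrow> apf ?N (init_config x) \<noteq> {}"
    proof
      assume "br M (init_config x)"
      then obtain cs0 c1 where "set cs0 \<subseteq> {0}" "run_choices M (0, t0, 0) cs0 = Some c1" "2 \<le> length (opts M c1)"
        unfolding br_def i0 by blast
      then obtain cs c' where A: "run_choices ?N (0, t0, 0) cs = Some c'" "halted ?N c'" "fst c' = ntm_states M"
        using N_acc_if[OF wf s0] by blast
      then have "cs \<in> apf ?N (init_config x)" unfolding apf_def x_accept i0 by blast
      then show "apf ?N (init_config x) \<noteq> {}" by blast
    next
      assume "apf ?N (init_config x) \<noteq> {}"
      then obtain cs c' where "run_choices ?N (0, t0, 0) cs = Some c'" "fst c' = ntm_states M"
        unfolding apf_def i0 x_accept by blast
      then show "br M (init_config x)" using N_acc_imp[OF wf s0] i0 by simp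
    qed
    also have "\<dots> \<longleftrightarrow> 0 < acc ?N x"
    proof -
      have "finite (apf ?N (init_config x))" using fin_cpf[OF ptN] apf_sub finite_subset by metis
      then show ?thesis by (simp add: acc_def acc_paths_apf card_gt_0_iff)
    qed
    finally show "x \<in> L \<longleftrightarrow> acc ?N x > 0" .
  qed
  then show ?thesis using NN det unfolding P_class_def by blast
qed

theorem proposition6:
  shows "(P_class = U_tot_P \<and> U_tot_P = Few_tot_P) \<and>
         (FewP \<subseteq> Few_tot_P \<longrightarrow> P_class = FewP)"
proof -
  have a: "P_class = U_tot_P" "U_tot_P = Few_tot_P"
    using P_sub_U U_sub_F F_sub_P by blast+
  have "FewP \<subseteq> Few_tot_P \<longrightarrow> P_class = FewP"
    using P_sub_Few F_sub_P by blast
  then show ?thesis using a by blast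
qed


end
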